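(* Let $K$ be a field, $I\subset R=K[x_1,\ldots,x_n]$ a square-free monomial ideal, and $1\le i\le n$. If $I$ has the copersistence property, then the deletion $I\setminus x_i$ has the copersistence property.
   Context: An ideal $I$ in a commutative Noetherian ring $R$ has the copersistence property if $\mathrm{Ass}_R(R/I^k)\supseteq\mathrm{Ass}_R(R/I^{k+1})$ for all $k\ge1$. If $\{u_1,\ldots,u_m\}$ is the minimal monomial generating set of $I$, the deletion $I\setminus x_i$ is the monomial ideal (in the polynomial ring over $K$ in the variables other than $x_i$) generated by the polynomials obtained from $u_1,\ldots,u_m$ by setting $x_i=0$, i.e. by those $u_k$ not divisible by $x_i$. *)

theory Defs
  imports "HOL-Library.Poly_Mapping" "HOL-Algebra.Ideal_Product"
begin

text \<open>Polynomials over a field K in variables indexed by natural numbers: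
  a polynomial is a finitely supported map from monomials (exponent vectors
  nat =>0 nat) to coefficients.  The polynomial ring K[x_v : v \<in> V]
  is the subring of those polynomials whose monomials only involve
  variables from V.\<close>

type_synonym 'k mpoly = "(nat \<Rightarrow>\<^sub>0 nat) \<Rightarrow>\<^sub>0 'k"

definition poly_ring :: "nat set \<Rightarrow> 'k::field mpoly ring" where
  "poly_ring V = \<lparr> carrier = {p :: 'k mpoly. \<forall>m \<in> Poly_Mapping.keys p. Poly_Mapping.keys m \<subseteq> V},
                   mult = (*), one = 1, zero = 0, add = (+) \<rparr>"

definition monomial :: "(nat \<Rightarrow>\<^sub>0 nat) \<Rightarrow> 'k::field mpoly" where
  "monomial a = Poly_Mapping.single a 1"

definition ideal_power :: "('a, 'b) ring_scheme \<Rightarrow> 'a set \<Rightarrow> nat \<Rightarrow> 'a set" where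
  "ideal_power R I k = I [^]\<^bsub>ideals_set R\<^esub> k"

text \<open>Associated primes of the R-module R/I: prime ideals P of R that are
  annihilators of some element a + I of R/I, i.e. P = (I : a).\<close>
definition Ass :: "('a, 'b) ring_scheme \<Rightarrow> 'a set \<Rightarrow> 'a set set" where
  "Ass R I = {P. primeideal P R \<and>
                 (\<exists>a \<in> carrier R. P = {r \<in> carrier R. r \<otimes>\<^bsub>R\<^esub> a \<in> I})}"

definition copersistent :: "('a, 'b) ring_scheme \<Rightarrow> 'a set \<Rightarrow> bool" where
  "copersistent R I \<longleftrightarrow>
     (\<forall>k \<ge> 1. Ass R (ideal_power R I (k + 1)) \<subseteq> Ass R (ideal_power R I k))"

text \<open>G is the minimal monomial generating set of a square-free monomial ideal
  of K[x_v : v \<in> V]: finitely many square-free exponent vectors supported in V,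
  pairwise incomparable under divisibility.\<close>
definition minimal_sqfree_gens :: "nat set \<Rightarrow> (nat \<Rightarrow>\<^sub>0 nat) set \<Rightarrow> bool" where
  "minimal_sqfree_gens V G \<longleftrightarrow> finite G \<and>
     (\<forall>u \<in> G. Poly_Mapping.keys u \<subseteq> V \<and> (\<forall>v. Poly_Mapping.lookup u v \<le> 1)) \<and>
     (\<forall>u \<in> G. \<forall>w \<in> G. (\<forall>v. Poly_Mapping.lookup u v \<le> Poly_Mapping.lookup w v) \<longrightarrow> u = w)"

definition deletion :: "nat set \<Rightarrow> (nat \<Rightarrow>\<^sub>0 nat) set \<Rightarrow> nat \<Rightarrow> 'k::field mpoly set" where
  "deletion V G i = genideal (poly_ring (V - {i})) (monomial ` {u \<in> G. Poly_Mapping.lookup u i = 0})"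

end

theory Submission
  imports Defs
begin

lemma pr_carrier:
  "carrier (poly_ring V :: 'k::field mpoly ring) = {p. \<forall>m \<in> Poly_Mapping.keys p. Poly_Mapping.keys m \<subseteq> V}"
  by (simp add: poly_ring_def)

lemma pr_simps [simp]:
  "mult (poly_ring V :: 'k::field mpoly ring) = (*)"
  "one (poly_ring V :: 'k::field mpoly ring) = 1"
  "zero (poly_ring V :: 'k::field mpoly ring) = 0"
  "add (poly_ring V :: 'k::field mpoly ring) = (+)"
  by (simp_all add: poly_ring_def)

lemma keys_add_nat: "Poly_Mapping.keys ((a::nat \<Rightarrow>\<^sub>0 nat) + b) = Poly_Mapping.keys a \<union> Poly_Mapping.keys b"
  by (auto simp: in_keys_iff lookup_add)

lemma keys_uminus_mp [simp]: "Poly_Mapping.keys (- (p::'k::field mpoly)) = Poly_Mapping.keys p"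
  by (auto simp: in_keys_iff)

lemma keys_mult_sub: "x \<in> Poly_Mapping.keys (p * q) \<Longrightarrow> \<exists>a\<in>Poly_Mapping.keys p. \<exists>b\<in>Poly_Mapping.keys q. x = a + b"
  using keys_mult[of p q] by blast

lemma cr_add: "p \<in> carrier (poly_ring V) \<Longrightarrow> q \<in> carrier (poly_ring V) \<Longrightarrow> (p + q :: 'k::field mpoly) \<in> carrier (poly_ring V)"
  using keys_add[of p q] by (auto simp: pr_carrier)

lemma cr_mult: "p \<in> carrier (poly_ring V) \<Longrightarrow> q \<in> carrier (poly_ring V) \<Longrightarrow> (p * q :: 'k::field mpoly) \<in> carrier (poly_ring V)"
proof -
  assume p: "p \<in> carrier (poly_ring V)" and q: "q \<in> carrier (poly_ring V)"
  show ?thesis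
  proof (simp add: pr_carrier, intro ballI)
    fix m assume "m \<in> Poly_Mapping.keys (p * q)"
    then obtain a b where "a \<in> Poly_Mapping.keys p" "b \<in> Poly_Mapping.keys q" "m = a + b" by (blast dest: keys_mult_sub)
    then show "Poly_Mapping.keys m \<subseteq> V" using p q by (auto simp: keys_add_nat pr_carrier)
  qed
qed

lemma cr_uminus: "p \<in> carrier (poly_ring V) \<Longrightarrow> (- p :: 'k::field mpoly) \<in> carrier (poly_ring V)"
  by (auto simp: pr_carrier)

lemma cr_one: "(1 :: 'k::field mpoly) \<in> carrier (poly_ring V)" by (simp add: pr_carrier)
lemma cr_zero: "(0 :: 'k::field mpoly) \<in> carrier (poly_ring V)" by (simp add: pr_carrier)

lemma poly_ring_cring: "cring (poly_ring V :: 'k::field mpoly ring)"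
proof (rule cringI)
  show "abelian_group (poly_ring V :: 'k::field mpoly ring)"
  proof (rule abelian_groupI)
    fix x assume "x \<in> carrier (poly_ring V :: 'k mpoly ring)"
    then show "\<exists>y\<in>carrier (poly_ring V :: 'k mpoly ring). y \<oplus>\<^bsub>poly_ring V\<^esub> x = \<zero>\<^bsub>poly_ring V\<^esub>"
      by (intro bexI[of _ "- x"] cr_uminus) auto
  qed (auto simp: cr_add cr_zero algebra_simps)
  show "comm_monoid (poly_ring V :: 'k::field mpoly ring)"
    by (rule comm_monoidI) (auto simp: cr_mult cr_one algebra_simps)
qed (simp add: algebra_simps)

lemma pr_ainv: "p \<in> carrier (poly_ring V) \<Longrightarrow> a_inv (poly_ring V) p = (- p :: 'k::field mpoly)"
proof -
  assume p: "p \<in> carrier (poly_ring V)"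
  interpret cring "poly_ring V :: 'k mpoly ring" by (rule poly_ring_cring)
  show ?thesis using p cr_uminus[OF p] by (intro minus_equality) auto
qed

definition Zs :: "nat set \<Rightarrow> ((nat \<Rightarrow>\<^sub>0 nat) \<Rightarrow> bool) \<Rightarrow> 'k::field mpoly set" where
  "Zs V \<Phi> = {p \<in> carrier (poly_ring V). \<forall>\<kappa>\<in>Poly_Mapping.keys p. \<Phi> \<kappa>}"

lemma Zs_ideal:
  assumes up: "\<And>\<kappa> \<mu>. \<Phi> \<kappa> \<Longrightarrow> \<Phi> (\<kappa> + \<mu>)"
  shows "ideal (Zs V \<Phi> :: 'k::field mpoly set) (poly_ring V)"
proof -
  interpret cring "poly_ring V :: 'k mpoly ring" by (rule poly_ring_cring)
  have up': "\<Phi> (\<mu> + \<kappa>)" if "\<Phi> \<kappa>" for \<kappa> \<mu> using up[OF that, of \<mu>] by (simp add: add.commute)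
  show ?thesis
  proof (rule idealI)
    show "ring (poly_ring V :: 'k mpoly ring)" by (rule ring_axioms)
    show "subgroup (Zs V \<Phi> :: 'k mpoly set) (add_monoid (poly_ring V))"
    proof (rule subgroup.intro)
      show "Zs V \<Phi> \<subseteq> carrier (add_monoid (poly_ring V :: 'k mpoly ring))" by (auto simp: Zs_def)
      show "x \<otimes>\<^bsub>add_monoid (poly_ring V)\<^esub> y \<in> Zs V \<Phi>" if "x \<in> Zs V \<Phi>" "y \<in> Zs V \<Phi>" for x y :: "'k mpoly"
        using that keys_add[of x y] cr_add[of x V y] by (auto simp: Zs_def)
      show "\<one>\<^bsub>add_monoid (poly_ring V :: 'k mpoly ring)\<^esub> \<in> Zs V \<Phi>" by (simp add: Zs_def cr_zero)
      show "inv\<^bsub>add_monoid (poly_ring V)\<^esub> x \<in> Zs V \<Phi>" if "x \<in> Zs V \<Phi>" for x :: "'k mpoly"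
      proof -
        have "x \<in> carrier (poly_ring V)" using that by (simp add: Zs_def)
        then have "inv\<^bsub>add_monoid (poly_ring V)\<^esub> x = - x" using pr_ainv[of x V] by (simp add: a_inv_def)
        then show ?thesis using that cr_uminus[of x V] by (auto simp: Zs_def)
      qed
    qed
    show "x \<otimes>\<^bsub>poly_ring V\<^esub> a \<in> Zs V \<Phi>" if "a \<in> Zs V \<Phi>" "x \<in> carrier (poly_ring V)" for a x :: "'k mpoly"
      using that cr_mult[of x V a] by (auto simp: Zs_def dest!: keys_mult_sub intro: up')
    show "a \<otimes>\<^bsub>poly_ring V\<^esub> x \<in> Zs V \<Phi>" if "a \<in> Zs V \<Phi>" "x \<in> carrier (poly_ring V)" for a x :: "'k mpoly"
      using that cr_mult[of a V x] by (auto simp: Zs_def dest!: keys_mult_sub intro: up)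
  qed
qed

lemma lookup_mult_single:
  "Poly_Mapping.lookup (r * Poly_Mapping.single h (1::'k::field)) (\<kappa> + h) = Poly_Mapping.lookup r (\<kappa>::nat \<Rightarrow>\<^sub>0 nat)"
proof -
  have "\<And>l. (\<Sum>q. Poly_Mapping.lookup (Poly_Mapping.single h (1::'k)) q when \<kappa> + h = l + q) = (1 when \<kappa> = l)"
  proof -
    fix l
    have eq: "(\<lambda>q. Poly_Mapping.lookup (Poly_Mapping.single h (1::'k)) q when \<kappa> + h = l + q) = (\<lambda>q. (1 when \<kappa> = l) when q = h)"
      by (auto simp: lookup_single when_def fun_eq_iff)
    show "?thesis l" by (simp only: eq Sum_any_when_equal)
  qed
  then show ?thesis by (simp add: lookup_mult mult_when)
qed

lemma keys_mult_monomial: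
  "Poly_Mapping.keys (r * monomial h :: 'k::field mpoly) = (\<lambda>\<kappa>. \<kappa> + h) ` Poly_Mapping.keys r"
proof
  show "Poly_Mapping.keys (r * monomial h :: 'k::field mpoly) \<subseteq> (\<lambda>\<kappa>. \<kappa> + h) ` Poly_Mapping.keys r"
    using keys_mult[of r "monomial h :: 'k mpoly"] by (auto simp: monomial_def)
  show "(\<lambda>\<kappa>. \<kappa> + h) ` Poly_Mapping.keys r \<subseteq> Poly_Mapping.keys (r * monomial h :: 'k::field mpoly)"
    by (auto simp: monomial_def in_keys_iff lookup_mult_single)
qed

lemma keys_monomial [simp]: "Poly_Mapping.keys (monomial h :: 'k::field mpoly) = {h}"
  by (simp add: monomial_def)

lemma monomial_carrier: "Poly_Mapping.keys h \<subseteq> V \<Longrightarrow> (monomial h :: 'k::field mpoly) \<in> carrier (poly_ring V)"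
  by (simp add: pr_carrier)

lemma lookup_minus_nat: "Poly_Mapping.lookup ((a::nat \<Rightarrow>\<^sub>0 nat) - b) v = Poly_Mapping.lookup a v - Poly_Mapping.lookup b v"
  by (simp add: minus_poly_mapping.rep_eq)

definition dvdm :: "(nat \<Rightarrow>\<^sub>0 nat) \<Rightarrow> (nat \<Rightarrow>\<^sub>0 nat) \<Rightarrow> bool" where
  "dvdm s \<kappa> \<longleftrightarrow> (\<forall>v. Poly_Mapping.lookup s v \<le> Poly_Mapping.lookup \<kappa> v)"

lemma dvdm_add: "dvdm s \<kappa> \<Longrightarrow> dvdm s (\<kappa> + \<mu>)"
  by (auto simp: dvdm_def lookup_add intro: le_add1 order_trans)

lemma dvdm_minus_add: "dvdm s \<kappa> \<Longrightarrow> (\<kappa> - s) + s = \<kappa>"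
  by (auto simp: dvdm_def lookup_add lookup_minus_nat intro!: poly_mapping_eqI)

lemma keys_minus_nat_sub: "Poly_Mapping.keys ((a::nat \<Rightarrow>\<^sub>0 nat) - b) \<subseteq> Poly_Mapping.keys a"
  by (auto simp: in_keys_iff lookup_minus_nat)

definition MI :: "nat set \<Rightarrow> (nat \<Rightarrow>\<^sub>0 nat) set \<Rightarrow> 'k::field mpoly set" where
  "MI V S = Zs V (\<lambda>\<kappa>. \<exists>s\<in>S. dvdm s \<kappa>)"

lemma MI_ideal: "ideal (MI V S :: 'k::field mpoly set) (poly_ring V)"
  unfolding MI_def by (rule Zs_ideal) (auto intro: dvdm_add)

lemma Zs_colon:
  assumes "r \<in> carrier (poly_ring V)" "Poly_Mapping.keys h \<subseteq> V"
  shows "(r * monomial h :: 'k::field mpoly) \<in> Zs V \<Phi> \<longleftrightarrow> (\<forall>\<kappa>\<in>Poly_Mapping.keys r. \<Phi> (\<kappa> + h))"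
  using cr_mult[OF assms(1) monomial_carrier[OF assms(2)]] by (auto simp: Zs_def keys_mult_monomial)

lemma genideal_MI:
  assumes S: "\<forall>s\<in>S. Poly_Mapping.keys s \<subseteq> V"
  shows "genideal (poly_ring V) (monomial ` S :: 'k::field mpoly set) = MI V S"
proof -
  interpret cring "poly_ring V :: 'k mpoly ring" by (rule poly_ring_cring)
  have sub: "monomial ` S \<subseteq> carrier (poly_ring V :: 'k mpoly ring)"
    using S by (auto intro: monomial_carrier)
  have gens: "monomial ` S \<subseteq> (MI V S :: 'k mpoly set)"
    using S by (auto simp: MI_def Zs_def dvdm_def intro: monomial_carrier)
  let ?J = "genideal (poly_ring V) (monomial ` S :: 'k::field mpoly set)"
  interpret J: ideal ?J "poly_ring V :: 'k mpoly ring" by (rule genideal_ideal[OF sub])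
  have "p \<in> ?J" if "card (Poly_Mapping.keys p) = N" "p \<in> MI V S" for N p
    using that
  proof (induction N arbitrary: p)
    case 0
    then have "p = 0" by simp
    then show ?case using J.zero_closed by simp
  next
    case (Suc N)
    then obtain \<kappa> where k: "\<kappa> \<in> Poly_Mapping.keys p" by (metis card.empty empty_iff nat.distinct(1) subsetI subset_antisym)
    have pc: "p \<in> carrier (poly_ring V)" and pk: "\<forall>\<kappa>\<in>Poly_Mapping.keys p. \<exists>s\<in>S. dvdm s \<kappa>"
      using Suc.prems by (auto simp: MI_def Zs_def)
    obtain s where s: "s \<in> S" "dvdm s \<kappa>" using pk k by blast
    define c where "c = Poly_Mapping.lookup p \<kappa>"
    define t where "t = (Poly_Mapping.single \<kappa> c :: 'k mpoly)"
    have kV: "Poly_Mapping.keys \<kappa> \<subseteq> V" using pc k by (auto simp: pr_carrier)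
    have t_eq: "t = Poly_Mapping.single (\<kappa> - s) c * monomial s"
      by (simp add: t_def monomial_def mult_single dvdm_minus_add[OF s(2)])
    have c1: "(Poly_Mapping.single (\<kappa> - s) c :: 'k mpoly) \<in> carrier (poly_ring V)"
      using kV keys_minus_nat_sub[of \<kappa> s] by (auto simp: pr_carrier)
    have tJ: "t \<in> ?J"
      unfolding t_eq using J.I_l_closed[OF _ c1, of "monomial s"] genideal_self[OF sub] s(1) by auto
    define q where "q = p - t"
    have kq: "Poly_Mapping.keys q = Poly_Mapping.keys p - {\<kappa>}"
      by (auto simp: q_def t_def c_def in_keys_iff lookup_single when_def lookup_minus split: if_splits)
    have "card (Poly_Mapping.keys q) = N" using Suc.prems(1) k kq by simp
    moreover have "q \<in> MI V S" using Suc.prems(2) kq by (auto simp: MI_def Zs_def pr_carrier)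
    ultimately have "q \<in> ?J" by (rule Suc.IH)
    moreover have "p = q + t" by (simp add: q_def)
    ultimately show ?case using J.a_closed[of q t] tJ by simp
  qed
  then have "MI V S \<subseteq> ?J" by blast
  moreover have "?J \<subseteq> MI V S" by (rule genideal_minimal[OF MI_ideal gens])
  ultimately show ?thesis by blast
qed

definition addset :: "(nat \<Rightarrow>\<^sub>0 nat) set \<Rightarrow> (nat \<Rightarrow>\<^sub>0 nat) set \<Rightarrow> (nat \<Rightarrow>\<^sub>0 nat) set" where
  "addset S T = {s + t | s t. s \<in> S \<and> t \<in> T}"

lemma dvdm_plus: "dvdm s a \<Longrightarrow> dvdm t b \<Longrightarrow> dvdm (s + t) (a + b)"
  by (auto simp: dvdm_def lookup_add intro: add_mono)

lemma monomial_add: "(monomial (s + t) :: 'k::field mpoly) = monomial s * monomial t"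
  by (simp add: monomial_def mult_single)

lemma monomial_in_MI: "s \<in> S \<Longrightarrow> Poly_Mapping.keys s \<subseteq> V \<Longrightarrow> (monomial s :: 'k::field mpoly) \<in> MI V S"
  unfolding MI_def Zs_def using monomial_carrier[of s V] by (auto simp: dvdm_def)

lemma MI_prod:
  assumes S: "\<forall>s\<in>S. Poly_Mapping.keys s \<subseteq> V" and T: "\<forall>s\<in>T. Poly_Mapping.keys s \<subseteq> V"
  shows "ideal_prod (poly_ring V) (MI V S) (MI V T) = (MI V (addset S T) :: 'k::field mpoly set)"
proof
  interpret cring "poly_ring V :: 'k mpoly ring" by (rule poly_ring_cring)
  interpret M: ideal "MI V (addset S T) :: 'k mpoly set" "poly_ring V" by (rule MI_ideal)
  show "ideal_prod (poly_ring V) (MI V S) (MI V T) \<subseteq> (MI V (addset S T) :: 'k::field mpoly set)"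
  proof
    fix x assume "x \<in> ideal_prod (poly_ring V) (MI V S) (MI V T :: 'k mpoly set)"
    then show "x \<in> MI V (addset S T)"
    proof (induction rule: ideal_prod.induct)
      case (prod i j)
      have ic: "i \<in> carrier (poly_ring V)" and ik: "\<forall>a\<in>Poly_Mapping.keys i. \<exists>s\<in>S. dvdm s a"
        using prod(1) unfolding MI_def Zs_def by simp_all
      have jc: "j \<in> carrier (poly_ring V)" and jk: "\<forall>b\<in>Poly_Mapping.keys j. \<exists>t\<in>T. dvdm t b"
        using prod(2) unfolding MI_def Zs_def by simp_all
      have "\<exists>s\<in>addset S T. dvdm s \<kappa>" if kk: "\<kappa> \<in> Poly_Mapping.keys (i * j)" for \<kappa>
      proof -
        obtain a b where ab: "a \<in> Poly_Mapping.keys i" "b \<in> Poly_Mapping.keys j" "\<kappa> = a + b"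
          using keys_mult[of i j] kk by blast
        obtain s where s: "s \<in> S" "dvdm s a" using ik ab(1) by blast
        obtain t where t: "t \<in> T" "dvdm t b" using jk ab(2) by blast
        have "s + t \<in> addset S T" using s t unfolding addset_def by blast
        then show ?thesis using ab dvdm_plus[OF s(2) t(2)] by blast
      qed
      then show ?case using cr_mult[OF ic jc] unfolding MI_def Zs_def by simp
    next
      case (sum s1 s2)
      then show ?case using M.a_closed[of s1 s2] by simp
    qed
  qed
  show "(MI V (addset S T) :: 'k::field mpoly set) \<subseteq> ideal_prod (poly_ring V) (MI V S) (MI V T)"
  proof -
    have ST: "\<forall>s\<in>addset S T. Poly_Mapping.keys s \<subseteq> V"
      using S T by (force simp: addset_def keys_add_nat)
    have "genideal (poly_ring V) (monomial ` addset S T) \<subseteq> ideal_prod (poly_ring V) (MI V S) (MI V T :: 'k mpoly set)"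
    proof (rule genideal_minimal)
      show "ideal (ideal_prod (poly_ring V) (MI V S) (MI V T :: 'k mpoly set)) (poly_ring V)"
        by (intro ideal_prod_is_ideal MI_ideal)
      show "monomial ` addset S T \<subseteq> ideal_prod (poly_ring V) (MI V S) (MI V T :: 'k mpoly set)"
      proof
        fix x assume "x \<in> (monomial ` addset S T :: 'k mpoly set)"
        then obtain s t where st: "s \<in> S" "t \<in> T" "x = monomial s * monomial t"
          by (auto simp: addset_def monomial_add)
        have "(monomial s :: 'k mpoly) \<in> MI V S" "(monomial t :: 'k mpoly) \<in> MI V T"
          using st S T by (simp_all add: monomial_in_MI)
        then show "x \<in> ideal_prod (poly_ring V) (MI V S) (MI V T :: 'k mpoly set)"
          using ideal_prod.prod[of "monomial s" "MI V S" "monomial t" "MI V T" "poly_ring V"] st by simp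
      qed
    qed
    then show ?thesis using genideal_MI[OF ST, where 'k='k] by simp
  qed
qed

fun msum :: "(nat \<Rightarrow>\<^sub>0 nat) set \<Rightarrow> nat \<Rightarrow> (nat \<Rightarrow>\<^sub>0 nat) set" where
  "msum S 0 = {0}"
| "msum S (Suc k) = addset (msum S k) S"

lemma msum_keys: "\<forall>s\<in>S. Poly_Mapping.keys s \<subseteq> V \<Longrightarrow> \<forall>s\<in>msum S k. Poly_Mapping.keys s \<subseteq> V"
  by (induction k) (force simp: addset_def keys_add_nat)+

lemma MI_zero: "(MI V {0} :: 'k::field mpoly set) = carrier (poly_ring V)"
  by (auto simp: MI_def Zs_def dvdm_def)

lemma MI_power:
  assumes S: "\<forall>s\<in>S. Poly_Mapping.keys s \<subseteq> V"
  shows "ideal_power (poly_ring V) (MI V S) k = (MI V (msum S k) :: 'k::field mpoly set)"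
proof (induction k)
  interpret cring "poly_ring V :: 'k mpoly ring" by (rule poly_ring_cring)
  have mon: "monoid (ideals_set (poly_ring V :: 'k mpoly ring))"
    using ideals_set_is_comm_monoid comm_monoid.axioms(1) by blast
  case 0
  have "one (ideals_set (poly_ring V :: 'k mpoly ring)) = carrier (poly_ring V)" by (simp add: ideals_set_def)
  then show ?case using monoid.nat_pow_0[OF mon] by (simp add: ideal_power_def MI_zero)
next
  case (Suc k)
  interpret cring "poly_ring V :: 'k mpoly ring" by (rule poly_ring_cring)
  have mon: "monoid (ideals_set (poly_ring V :: 'k mpoly ring))"
    using ideals_set_is_comm_monoid comm_monoid.axioms(1) by blast
  have mm: "mult (ideals_set (poly_ring V :: 'k mpoly ring)) = ideal_prod (poly_ring V)" by (simp add: ideals_set_def)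
  have "ideal_power (poly_ring V) (MI V S) (Suc k) = ideal_prod (poly_ring V) (ideal_power (poly_ring V) (MI V S) k) (MI V S :: 'k mpoly set)"
    unfolding ideal_power_def using monoid.nat_pow_Suc[OF mon] mm by metis
  also have "\<dots> = MI V (addset (msum S k) S)"
    using Suc.IH MI_prod[OF msum_keys[OF S, of k] S] by simp
  finally show ?case by simp
qed

definition ddeg :: "nat set \<Rightarrow> (nat \<Rightarrow>\<^sub>0 nat) \<Rightarrow> nat" where
  "ddeg F \<kappa> = (\<Sum>v\<in>F. Poly_Mapping.lookup \<kappa> v)"

lemma ddeg_add: "ddeg F (a + b) = ddeg F a + ddeg F b"
  by (simp add: ddeg_def lookup_add sum.distrib)

lemma ddeg_zero [simp]: "ddeg F 0 = 0"
  by (simp add: ddeg_def)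

definition QD :: "nat set \<Rightarrow> nat set \<Rightarrow> nat \<Rightarrow> 'k::field mpoly set" where
  "QD V F m = Zs V (\<lambda>\<kappa>. m \<le> ddeg F \<kappa>)"

lemma QD_ideal: "ideal (QD V F m :: 'k::field mpoly set) (poly_ring V)"
  unfolding QD_def by (rule Zs_ideal) (simp add: ddeg_add)

lemma keys_mult_ddeg:
  assumes "\<forall>x\<in>Poly_Mapping.keys p. e1 \<le> ddeg F x" "\<forall>y\<in>Poly_Mapping.keys q. e2 \<le> ddeg F y"
    and "z \<in> Poly_Mapping.keys (p * q :: 'k::field mpoly)"
  shows "e1 + e2 \<le> ddeg F z"
proof -
  obtain x y where "x \<in> Poly_Mapping.keys p" "y \<in> Poly_Mapping.keys q" "z = x + y"
    using keys_mult[of p q] assms(3) by blast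
  then show ?thesis using assms(1,2) by (auto simp: ddeg_add intro: add_mono)
qed

definition restr :: "(nat \<Rightarrow>\<^sub>0 nat) set \<Rightarrow> 'k::field mpoly \<Rightarrow> 'k mpoly" where
  "restr A p = Abs_poly_mapping (\<lambda>\<kappa>. if \<kappa> \<in> A then Poly_Mapping.lookup p \<kappa> else 0)"

lemma lookup_restr: "Poly_Mapping.lookup (restr A p) \<kappa> = (if \<kappa> \<in> A then Poly_Mapping.lookup p \<kappa> else 0)"
proof -
  have "finite {\<kappa>. (if \<kappa> \<in> A then Poly_Mapping.lookup p \<kappa> else 0) \<noteq> 0}"
    by (rule finite_subset[OF _ finite_lookup[of p]]) auto
  then show ?thesis unfolding restr_def by simp
qed

lemma primary_core:
  fixes r a :: "'k::field mpoly"
  assumes r0: "\<exists>x\<in>Poly_Mapping.keys r. ddeg F x = 0" and a0: "\<exists>y\<in>Poly_Mapping.keys a. ddeg F y < m"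
  shows "\<exists>z\<in>Poly_Mapping.keys (r * a). ddeg F z < m"
proof -
  define d where "d = Min (ddeg F ` Poly_Mapping.keys a)"
  have fin: "finite (ddeg F ` Poly_Mapping.keys a)" by simp
  have ne: "ddeg F ` Poly_Mapping.keys a \<noteq> {}" using a0 by auto
  have dle: "d \<le> ddeg F y" if "y \<in> Poly_Mapping.keys a" for y
    using that fin by (simp add: d_def)
  have dlt: "d < m" using a0 dle le_less_trans by blast
  obtain y0 where y0: "y0 \<in> Poly_Mapping.keys a" "ddeg F y0 = d"
    using Min_in[OF fin ne] unfolding d_def by auto
  define r0 where "r0 = restr {x. ddeg F x = 0} r"
  define r1 where "r1 = r - r0"
  define a0 where "a0 = restr {y. ddeg F y = d} a"
  define a1 where "a1 = a - a0"
  obtain x0 where x0: "x0 \<in> Poly_Mapping.keys r" "ddeg F x0 = 0" using r0 by blast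
  have "Poly_Mapping.lookup r0 x0 \<noteq> 0" using x0 by (simp add: r0_def lookup_restr in_keys_iff)
  then have r0nz: "r0 \<noteq> 0" by auto
  have "Poly_Mapping.lookup a0 y0 \<noteq> 0" using y0 by (simp add: a0_def lookup_restr in_keys_iff)
  then have a0nz: "a0 \<noteq> 0" by auto
  have "r0 * a0 \<noteq> 0" using r0nz a0nz by simp
  then obtain z where z: "z \<in> Poly_Mapping.keys (r0 * a0)"
    by (metis all_not_in_conv keys_eq_empty)
  have kr0: "\<forall>x\<in>Poly_Mapping.keys r0. 0 \<le> ddeg F x" by simp
  have kr0': "\<forall>x\<in>Poly_Mapping.keys r0. ddeg F x \<le> 0"
    by (auto simp: r0_def in_keys_iff lookup_restr split: if_splits)
  have ka0: "\<forall>y\<in>Poly_Mapping.keys a0. ddeg F y = d"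
    by (auto simp: a0_def in_keys_iff lookup_restr split: if_splits)
  have kr1: "\<forall>x\<in>Poly_Mapping.keys r1. 1 \<le> ddeg F x"
    by (auto simp: r1_def r0_def in_keys_iff lookup_restr lookup_minus split: if_splits)
  have ka1: "\<forall>y\<in>Poly_Mapping.keys a1. Suc d \<le> ddeg F y"
  proof
    fix y assume y: "y \<in> Poly_Mapping.keys a1"
    then have "y \<in> Poly_Mapping.keys a" "ddeg F y \<noteq> d"
      by (auto simp: a1_def a0_def in_keys_iff lookup_restr lookup_minus split: if_splits)
    then show "Suc d \<le> ddeg F y" using dle by fastforce
  qed
  have zd: "ddeg F z = d"
  proof -
    obtain x y where "x \<in> Poly_Mapping.keys r0" "y \<in> Poly_Mapping.keys a0" "z = x + y"
      using keys_mult[of r0 a0] z by blast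
    then show ?thesis using kr0' ka0 by (auto simp: ddeg_add)
  qed
  have n1: "z \<notin> Poly_Mapping.keys (r0 * a1)"
    using keys_mult_ddeg[OF kr0 ka1, of z] zd by auto
  have n2: "z \<notin> Poly_Mapping.keys (r1 * a0)"
    using keys_mult_ddeg[of r1 1 F a0 d z] kr1 ka0 zd by auto
  have n3: "z \<notin> Poly_Mapping.keys (r1 * a1)"
    using keys_mult_ddeg[OF kr1 ka1, of z] zd by auto
  have "r * a = r0 * a0 + r0 * a1 + r1 * a0 + r1 * a1"
    by (simp add: r1_def a1_def algebra_simps)
  then have "Poly_Mapping.lookup (r * a) z = Poly_Mapping.lookup (r0 * a0) z"
    using n1 n2 n3 by (simp add: lookup_add in_keys_iff)
  then have "z \<in> Poly_Mapping.keys (r * a)" using z by (simp add: in_keys_iff)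
  then show ?thesis using zd dlt by auto
qed

lemma QD_primary:
  assumes "r \<in> carrier (poly_ring V)" "a \<in> carrier (poly_ring V)"
    and "(r * a :: 'k::field mpoly) \<in> QD V F m" "a \<notin> QD V F m"
  shows "r \<in> QD V F 1"
proof (rule ccontr)
  assume "r \<notin> QD V F 1"
  then have "\<exists>x\<in>Poly_Mapping.keys r. ddeg F x = 0" using assms(1) by (auto simp: QD_def Zs_def not_less_eq_eq)
  moreover have "\<exists>y\<in>Poly_Mapping.keys a. ddeg F y < m" using assms(2,4) by (auto simp: QD_def Zs_def not_le)
  ultimately obtain z where "z \<in> Poly_Mapping.keys (r * a)" "ddeg F z < m" using primary_core by blast
  then show False using assms(3) by (auto simp: QD_def Zs_def)
qed

lemma one_notin_QD: "(1::'k::field mpoly) \<notin> QD V F 1"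
  by (simp add: QD_def Zs_def)

lemma QD_prime: "primeideal (QD V F 1 :: 'k::field mpoly set) (poly_ring V)"
proof (rule primeidealI)
  show "ideal (QD V F 1 :: 'k::field mpoly set) (poly_ring V)" by (rule QD_ideal)
  show "cring (poly_ring V :: 'k mpoly ring)" by (rule poly_ring_cring)
  show "carrier (poly_ring V) \<noteq> (QD V F 1 :: 'k::field mpoly set)"
    using one_notin_QD cr_one by blast
  fix a b :: "'k mpoly"
  assume "a \<in> carrier (poly_ring V)" "b \<in> carrier (poly_ring V)" "a \<otimes>\<^bsub>poly_ring V\<^esub> b \<in> QD V F 1"
  then show "a \<in> QD V F 1 \<or> b \<in> QD V F 1" using QD_primary[of a V b F 1] by auto
qed


lemma prime_avoid:
  fixes R (structure)
  assumes P: "primeideal P R" and fin: "finite \<F>"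
    and Cc: "\<And>F. F \<in> \<F> \<Longrightarrow> C F \<subseteq> carrier R"
    and Cm: "\<And>F x y. F \<in> \<F> \<Longrightarrow> x \<in> C F \<Longrightarrow> y \<in> carrier R \<Longrightarrow> y \<otimes> x \<in> C F \<and> x \<otimes> y \<in> C F"
    and sub: "\<And>r. r \<in> carrier R \<Longrightarrow> (\<forall>F\<in>\<F>. r \<in> C F) \<Longrightarrow> r \<in> P"
  shows "\<exists>F\<in>\<F>. C F \<subseteq> P"
proof (rule ccontr)
  interpret primeideal P R by (rule P)
  assume "\<not> (\<exists>F\<in>\<F>. C F \<subseteq> P)"
  then have ex: "\<forall>F\<in>\<F>. \<exists>x\<in>C F. x \<notin> P" by blast
  have "\<exists>y\<in>carrier R. y \<notin> P \<and> (\<forall>F\<in>\<G>. y \<in> C F)" if "\<G> \<subseteq> \<F>" for \<G>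
    using finite_subset[OF that fin] that
  proof (induction \<G> rule: finite_induct)
    case empty
    have "\<one> \<notin> P" using I_notcarr one_imp_carrier by blast
    then show ?case by (intro bexI[of _ \<one>]) auto
  next
    case (insert F0 \<G>)
    then obtain y where y: "y \<in> carrier R" "y \<notin> P" "\<forall>F\<in>\<G>. y \<in> C F" by auto
    obtain x where x: "x \<in> C F0" "x \<notin> P" using ex insert.prems by auto
    have xc: "x \<in> carrier R" using x Cc insert.prems by auto
    have "x \<otimes> y \<notin> P" using I_prime[OF xc y(1)] x y by auto
    moreover have "x \<otimes> y \<in> C F0" using Cm[of F0 x y] x y insert.prems by auto
    moreover have "\<forall>F\<in>\<G>. x \<otimes> y \<in> C F" using Cm y xc insert.prems by auto
    ultimately show ?case using xc y by (intro bexI[of _ "x \<otimes> y"]) auto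
  qed
  then obtain y where "y \<in> carrier R" "y \<notin> P" "\<forall>F\<in>\<F>. y \<in> C F" by blast
  then show False using sub by blast
qed

lemma prime_power:
  assumes P: "primeideal P (poly_ring V)" and r: "r \<in> carrier (poly_ring V)"
    and "(r ^ Suc k :: 'k::field mpoly) \<in> P"
  shows "r \<in> P"
  using assms(3)
proof (induction k)
  case 0
  then show ?case by simp
next
  case (Suc k)
  interpret primeideal P "poly_ring V :: 'k mpoly ring" by (rule P)
  have rk: "r ^ Suc k \<in> carrier (poly_ring V)"
  proof (induction k)
    case 0 then show ?case using r by simp
  next
    case (Suc k) then show ?case using cr_mult[OF r Suc.IH] by simp
  qed
  have "r \<otimes>\<^bsub>poly_ring V\<^esub> r ^ Suc k \<in> P" using Suc.prems by simp
  then show ?case using I_prime[OF r rk] Suc.IH by blast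
qed

lemma keys_power_ddeg:
  assumes "\<forall>x\<in>Poly_Mapping.keys (r::'k::field mpoly). 1 \<le> ddeg F x"
  shows "\<forall>z\<in>Poly_Mapping.keys (r ^ k). k \<le> ddeg F z"
proof (induction k)
  case 0
  then show ?case by simp
next
  case (Suc k)
  show ?case using keys_mult_ddeg[OF assms Suc.IH] by simp
qed

lemma prime_colon_inter:
  assumes fin: "finite \<F>" and m: "1 \<le> m" and a: "a \<in> carrier (poly_ring V)"
    and P: "P = {r \<in> carrier (poly_ring V). r * a \<in> Zs V (\<lambda>\<kappa>. \<forall>F\<in>\<F>. m \<le> ddeg F \<kappa>)}"
    and Pp: "primeideal (P :: 'k::field mpoly set) (poly_ring V)"
  shows "\<exists>F\<in>\<F>. P = QD V F 1"
proof -
  interpret cring "poly_ring V :: 'k mpoly ring" by (rule poly_ring_cring)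
  define C where "C F = {r \<in> carrier (poly_ring V). r * a \<in> (QD V F m :: 'k mpoly set)}" for F
  have Cm: "y \<otimes>\<^bsub>poly_ring V\<^esub> x \<in> C F \<and> x \<otimes>\<^bsub>poly_ring V\<^esub> y \<in> C F"
    if "x \<in> C F" "y \<in> carrier (poly_ring V)" for F x y
  proof -
    interpret Q: ideal "QD V F m :: 'k mpoly set" "poly_ring V" by (rule QD_ideal)
    have xc: "x \<in> carrier (poly_ring V)" and xa: "x * a \<in> QD V F m" using that by (auto simp: C_def)
    have "y * (x * a) \<in> QD V F m" using Q.I_l_closed[OF xa that(2)] by simp
    then show ?thesis using that(2) xc cr_mult[OF xc that(2)] cr_mult[OF that(2) xc]
      by (simp add: C_def ac_simps)
  qed
  have sub: "r \<in> P" if "r \<in> carrier (poly_ring V)" "\<forall>F\<in>\<F>. r \<in> C F" for r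
    using that cr_mult[OF that(1) a] by (auto simp: P C_def QD_def Zs_def)
  obtain F where F: "F \<in> \<F>" "C F \<subseteq> P"
    using prime_avoid[OF Pp fin, of C] Cm sub by (auto simp: C_def)
  have PC: "P \<subseteq> C F" using F(1) by (auto simp: P C_def QD_def Zs_def)
  have PCe: "P = C F" using PC F(2) by blast
  interpret Pi: primeideal P "poly_ring V" by (rule Pp)
  have anot: "a \<notin> QD V F m"
  proof
    assume aQ: "a \<in> QD V F m"
    interpret Q: ideal "QD V F m :: 'k mpoly set" "poly_ring V" by (rule QD_ideal)
    have "carrier (poly_ring V) \<subseteq> C F"
    proof
      fix r :: "'k mpoly" assume r: "r \<in> carrier (poly_ring V)"
      have "r \<otimes>\<^bsub>poly_ring V\<^esub> a \<in> QD V F m" using Q.I_r_closed[OF aQ r] by (simp add: mult.commute)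
      then show "r \<in> C F" using r by (simp add: C_def)
    qed
    then have "carrier (poly_ring V) = P" using PCe Pi.a_subset by blast
    then show False using Pi.I_notcarr by blast
  qed
  have "P = QD V F 1"
  proof
    show "P \<subseteq> QD V F 1"
    proof
      fix r assume "r \<in> P"
      then have r: "r \<in> carrier (poly_ring V)" "r * a \<in> QD V F m" unfolding PCe C_def by auto
      show "r \<in> QD V F 1" by (rule QD_primary[OF r(1) a r(2) anot])
    qed
    show "QD V F 1 \<subseteq> P"
    proof
      fix r assume r: "r \<in> (QD V F 1 :: 'k mpoly set)"
      then have rc: "r \<in> carrier (poly_ring V)" by (simp add: QD_def Zs_def)
      obtain k where k: "m = Suc k" using m by (cases m) auto
      have rkc: "r ^ m \<in> carrier (poly_ring V)"
      proof (induction m)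
        case 0 then show ?case by (simp add: cr_one)
      next
        case (Suc m) then show ?case using cr_mult[OF Suc.IH rc] by (simp add: mult.commute)
      qed
      have "r ^ m \<in> QD V F m"
        using keys_power_ddeg[of r F m] r rkc by (auto simp: QD_def Zs_def)
      then have "r ^ m * a \<in> QD V F m"
        using ideal.I_r_closed[OF QD_ideal _ a] by simp
      then have "r ^ m \<in> P" using rkc unfolding PCe C_def by blast
      then show "r \<in> P" using prime_power[OF Pp rc] k by simp
    qed
  qed
  then show ?thesis using F(1) by blast
qed

definition cover :: "nat set \<Rightarrow> (nat \<Rightarrow>\<^sub>0 nat) set \<Rightarrow> nat set \<Rightarrow> bool" where
  "cover V S F \<longleftrightarrow> F \<subseteq> V \<and> (\<forall>s\<in>S. \<exists>j\<in>F. 1 \<le> Poly_Mapping.lookup s j)"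

definition mincover :: "nat set \<Rightarrow> (nat \<Rightarrow>\<^sub>0 nat) set \<Rightarrow> nat set \<Rightarrow> bool" where
  "mincover V S F \<longleftrightarrow> cover V S F \<and> (\<forall>F'. F' \<subset> F \<longrightarrow> \<not> cover V S F')"

lemma ddeg_ge_lookup: "finite F \<Longrightarrow> j \<in> F \<Longrightarrow> Poly_Mapping.lookup s j \<le> ddeg F s"
  unfolding ddeg_def by (rule member_le_sum) auto

lemma ddeg_mono: "finite F \<Longrightarrow> (\<forall>v\<in>F. Poly_Mapping.lookup a v \<le> Poly_Mapping.lookup b v) \<Longrightarrow> ddeg F a \<le> ddeg F b"
  unfolding ddeg_def by (rule sum_mono) auto

lemma ddeg_subset: "finite F \<Longrightarrow> F' \<subseteq> F \<Longrightarrow> ddeg F' a \<le> ddeg F a"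
  unfolding ddeg_def by (rule sum_mono2) auto

lemma ddeg_single: "finite F \<Longrightarrow> ddeg F (Poly_Mapping.single j 1) = (if j \<in> F then 1 else 0)"
  unfolding ddeg_def by (simp add: lookup_single when_def)

lemma ddeg_pos_iff: "finite F \<Longrightarrow> (1 \<le> ddeg F s) \<longleftrightarrow> (\<exists>j\<in>F. 1 \<le> Poly_Mapping.lookup s j)"
proof
  assume "finite F" "1 \<le> ddeg F s"
  then have "ddeg F s \<noteq> 0" by simp
  then show "\<exists>j\<in>F. 1 \<le> Poly_Mapping.lookup s j" unfolding ddeg_def by (metis sum.neutral less_one not_le)
next
  assume "finite F" "\<exists>j\<in>F. 1 \<le> Poly_Mapping.lookup s j"
  then show "1 \<le> ddeg F s" using ddeg_ge_lookup order_trans by blast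
qed

lemma msum_ddeg:
  assumes "cover V S F" "finite F" "s \<in> msum S m"
  shows "m \<le> ddeg F s"
  using assms(3)
proof (induction m arbitrary: s)
  case 0 then show ?case by simp
next
  case (Suc m)
  then obtain s' t where st: "s' \<in> msum S m" "t \<in> S" "s = s' + t" by (auto simp: addset_def)
  have "1 \<le> ddeg F t" using assms(1) st(2) ddeg_pos_iff[OF assms(2), of t] by (auto simp: cover_def)
  then show ?case using Suc.IH[OF st(1)] st(3) by (simp add: ddeg_add)
qed

lemma dvdm_ddeg: "finite F \<Longrightarrow> dvdm s \<kappa> \<Longrightarrow> ddeg F s \<le> ddeg F \<kappa>"
  by (auto simp: dvdm_def intro: ddeg_mono)

lemma exists_mincover:
  assumes "cover V S F" "finite F"
  shows "\<exists>F0\<subseteq>F. mincover V S F0"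
  using assms
proof (induction "card F" arbitrary: F rule: less_induct)
  case less
  show ?case
  proof (cases "mincover V S F")
    case True then show ?thesis by blast
  next
    case False
    then obtain F' where F': "F' \<subset> F" "cover V S F'" using less.prems by (auto simp: mincover_def)
    have "card F' < card F" using F'(1) less.prems(2) by (simp add: psubset_card_mono)
    then obtain F0 where "F0 \<subseteq> F'" "mincover V S F0"
      using less.hyps[of F'] F' less.prems(2) finite_subset by (metis psubset_imp_subset)
    then show ?thesis using F'(1) by blast
  qed
qed

lemma finite_MC: "finite V \<Longrightarrow> finite {F. mincover V S F}"
  by (rule finite_subset[of _ "Pow V"]) (auto simp: mincover_def cover_def)

lemma mincover_finite: "finite V \<Longrightarrow> mincover V S F \<Longrightarrow> finite F"
  by (auto simp: mincover_def cover_def intro: finite_subset)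

definition sqfree :: "nat set \<Rightarrow> (nat \<Rightarrow>\<^sub>0 nat) set \<Rightarrow> bool" where
  "sqfree V S \<longleftrightarrow> (\<forall>u\<in>S. Poly_Mapping.keys u \<subseteq> V \<and> (\<forall>v. Poly_Mapping.lookup u v \<le> 1))"

lemma sqfree_m1:
  assumes sq: "sqfree V S" and V: "finite V" and kV: "Poly_Mapping.keys \<kappa> \<subseteq> V"
    and h: "\<forall>F. mincover V S F \<longrightarrow> 1 \<le> ddeg F \<kappa>"
  shows "\<exists>s\<in>S. dvdm s \<kappa>"
proof (rule ccontr)
  assume no: "\<not> (\<exists>s\<in>S. dvdm s \<kappa>)"
  define F where "F = V - Poly_Mapping.keys \<kappa>"
  have "cover V S F"
    unfolding cover_def
  proof (intro conjI ballI)
    show "F \<subseteq> V" by (auto simp: F_def)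
    fix s assume s: "s \<in> S"
    then obtain v where v: "Poly_Mapping.lookup \<kappa> v < Poly_Mapping.lookup s v" using no by (auto simp: dvdm_def not_le)
    have le1: "Poly_Mapping.lookup s v \<le> 1" using sq s by (auto simp: sqfree_def)
    then have "Poly_Mapping.lookup s v = 1" "Poly_Mapping.lookup \<kappa> v = 0" using v by linarith+
    moreover then have "v \<in> Poly_Mapping.keys s" by (simp add: in_keys_iff)
    then have "v \<in> V" using sq s unfolding sqfree_def by blast
    ultimately show "\<exists>j\<in>F. 1 \<le> Poly_Mapping.lookup s j" by (auto simp: F_def in_keys_iff intro!: bexI[of _ v])
  qed
  then obtain F0 where F0: "F0 \<subseteq> F" "mincover V S F0" using exists_mincover[of V S F] V by (auto simp: F_def)
  have "finite F0" using F0 V mincover_finite by blast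
  then have "ddeg F0 \<kappa> = 0" using F0(1) unfolding ddeg_def F_def by (auto simp: in_keys_iff)
  then show False using h F0(2) by auto
qed

lemma mincover_private:
  assumes sq: "sqfree V S" and mc: "mincover V S F" and j: "j \<in> F"
  shows "\<exists>u\<in>S. Poly_Mapping.lookup u j = 1 \<and> (\<forall>j'\<in>F. j' \<noteq> j \<longrightarrow> Poly_Mapping.lookup u j' = 0)"
proof -
  have "F - {j} \<subset> F" using j by blast
  then have "\<not> cover V S (F - {j})" using mc by (auto simp: mincover_def)
  moreover have "F - {j} \<subseteq> V" using mc by (auto simp: mincover_def cover_def)
  ultimately obtain u where u: "u \<in> S" "\<forall>j'\<in>F - {j}. Poly_Mapping.lookup u j' = 0"
    by (auto simp: cover_def not_le)
  obtain j'' where "j'' \<in> F" "1 \<le> Poly_Mapping.lookup u j''" using mc u(1) by (auto simp: mincover_def cover_def)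
  then have "j'' = j" using u(2) by (metis Diff_iff empty_iff insert_iff not_one_le_zero)
  then have "1 \<le> Poly_Mapping.lookup u j" using \<open>1 \<le> Poly_Mapping.lookup u j''\<close> by simp
  then have "Poly_Mapping.lookup u j = 1" using sq u(1) by (auto simp: sqfree_def intro: le_antisym)
  then show ?thesis using u by blast
qed

lemma single_minus_add: "1 \<le> Poly_Mapping.lookup (\<kappa>::nat \<Rightarrow>\<^sub>0 nat) j \<Longrightarrow> (\<kappa> - Poly_Mapping.single j 1) + Poly_Mapping.single j 1 = \<kappa>"
  by (rule poly_mapping_eqI) (auto simp: lookup_add lookup_minus_nat lookup_single when_def)

lemma mincover_msum:
  assumes sq: "sqfree V S" and mc: "mincover V S F" and V: "finite V"
  shows "m \<le> ddeg F \<kappa> \<Longrightarrow> \<exists>s\<in>msum S m. (\<forall>v\<in>F. Poly_Mapping.lookup s v \<le> Poly_Mapping.lookup \<kappa> v) \<and> (\<forall>v. Poly_Mapping.lookup s v \<le> m)"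
proof (induction m arbitrary: \<kappa>)
  case 0 then show ?case by (auto intro!: bexI[of _ 0])
next
  case (Suc m)
  have fF: "finite F" using mincover_finite[OF V mc] .
  have "ddeg F \<kappa> \<noteq> 0" using Suc.prems by simp
  then obtain j where j: "j \<in> F" "1 \<le> Poly_Mapping.lookup \<kappa> j" using ddeg_pos_iff[OF fF] by force
  define \<kappa>' where "\<kappa>' = \<kappa> - Poly_Mapping.single j 1"
  have "\<kappa>' + Poly_Mapping.single j 1 = \<kappa>" using single_minus_add[OF j(2)] by (simp add: \<kappa>'_def)
  then have "ddeg F \<kappa> = ddeg F \<kappa>' + 1" using ddeg_add[of F \<kappa>' "Poly_Mapping.single j 1"] ddeg_single[OF fF, of j] j(1) by simp
  then have "m \<le> ddeg F \<kappa>'" using Suc.prems by simp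
  then obtain s' where s': "s' \<in> msum S m" "\<forall>v\<in>F. Poly_Mapping.lookup s' v \<le> Poly_Mapping.lookup \<kappa>' v" "\<forall>v. Poly_Mapping.lookup s' v \<le> m"
    using Suc.IH by blast
  obtain u where u: "u \<in> S" "Poly_Mapping.lookup u j = 1" "\<forall>j'\<in>F. j' \<noteq> j \<longrightarrow> Poly_Mapping.lookup u j' = 0"
    using mincover_private[OF sq mc j(1)] by blast
  have u1: "\<forall>v. Poly_Mapping.lookup u v \<le> 1" using sq u(1) by (auto simp: sqfree_def)
  have "s' + u \<in> msum S (Suc m)" unfolding msum.simps addset_def using s'(1) u(1) by blast
  moreover have "\<forall>v\<in>F. Poly_Mapping.lookup (s' + u) v \<le> Poly_Mapping.lookup \<kappa> v"
  proof
    fix v assume v: "v \<in> F"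
    have k: "Poly_Mapping.lookup \<kappa> v = Poly_Mapping.lookup \<kappa>' v + (if v = j then 1 else 0)"
      using arg_cong[OF \<open>\<kappa>' + Poly_Mapping.single j 1 = \<kappa>\<close>, of "\<lambda>x. Poly_Mapping.lookup x v"]
      by (auto simp: lookup_add lookup_single when_def split: if_splits)
    show "Poly_Mapping.lookup (s' + u) v \<le> Poly_Mapping.lookup \<kappa> v"
      using s'(2) v u(2,3) k by (cases "v = j") (auto simp: lookup_add)
  qed
  moreover have "\<forall>v. Poly_Mapping.lookup (s' + u) v \<le> Suc m"
  proof
    fix v show "Poly_Mapping.lookup (s' + u) v \<le> Suc m"
      using s'(3)[rule_format, of v] u1[rule_format, of v] by (simp add: lookup_add)
  qed
  ultimately show ?case by blast
qed

lemma dvdm_iff: "dvdm s \<kappa> \<longleftrightarrow> (\<forall>v. Poly_Mapping.lookup s v \<le> Poly_Mapping.lookup \<kappa> v)"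
  by (simp add: dvdm_def)

lemma colon_prime_exists:
  fixes S :: "(nat \<Rightarrow>\<^sub>0 nat) set"
  assumes fin: "finite S" and SV: "\<forall>s\<in>S. Poly_Mapping.keys s \<subseteq> V" and V: "finite V"
  shows "Poly_Mapping.keys h \<subseteq> V \<Longrightarrow> \<not> (\<exists>s\<in>S. dvdm s h) \<Longrightarrow>
    \<exists>g Q. Poly_Mapping.keys g \<subseteq> V \<and> Q \<subseteq> V \<and> \<not> (\<exists>s\<in>S. dvdm s (h + g)) \<and>
      (\<forall>\<kappa>. Poly_Mapping.keys \<kappa> \<subseteq> V \<longrightarrow> ((\<exists>s\<in>S. dvdm s (\<kappa> + (h + g))) \<longleftrightarrow> (\<exists>j\<in>Q. 1 \<le> Poly_Mapping.lookup \<kappa> j)))"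
proof (induction "\<Sum>s\<in>S. ddeg V (s - h)" arbitrary: h rule: less_induct)
  case less
  define Mm where "Mm x \<longleftrightarrow> (\<exists>s\<in>S. dvdm s x)" for x
  have hV: "Poly_Mapping.keys h \<subseteq> V" and nh: "\<not> Mm h" using less.prems by (auto simp: Mm_def)
  define Q where "Q = {j \<in> V. Mm (Poly_Mapping.single j 1 + h)}"
  show ?case
  proof (cases "\<forall>\<kappa>. Poly_Mapping.keys \<kappa> \<subseteq> V \<longrightarrow> Mm (\<kappa> + h) \<longrightarrow> (\<exists>j\<in>Q. 1 \<le> Poly_Mapping.lookup \<kappa> j)")
    case True
    have "(\<exists>j\<in>Q. 1 \<le> Poly_Mapping.lookup \<kappa> j) \<longrightarrow> Mm (\<kappa> + h)" for \<kappa>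
    proof
      assume "\<exists>j\<in>Q. 1 \<le> Poly_Mapping.lookup \<kappa> j"
      then obtain j where j: "j \<in> Q" "1 \<le> Poly_Mapping.lookup \<kappa> j" by blast
      then obtain s where s: "s \<in> S" "dvdm s (Poly_Mapping.single j 1 + h)" by (auto simp: Q_def Mm_def)
      have sj: "Poly_Mapping.lookup (Poly_Mapping.single j 1) v \<le> Poly_Mapping.lookup \<kappa> v" for v
        using j(2) by (auto simp: lookup_single when_def)
      have "dvdm s (\<kappa> + h)" unfolding dvdm_iff
      proof
        fix v
        have "Poly_Mapping.lookup s v \<le> Poly_Mapping.lookup (Poly_Mapping.single j 1) v + Poly_Mapping.lookup h v"
          using s(2) unfolding dvdm_iff by (simp add: lookup_add)
        then show "Poly_Mapping.lookup s v \<le> Poly_Mapping.lookup (\<kappa> + h) v"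
          using sj[of v] by (simp add: lookup_add)
      qed
      then show "Mm (\<kappa> + h)" using s(1) by (auto simp: Mm_def)
    qed
    then have "\<forall>\<kappa>. Poly_Mapping.keys \<kappa> \<subseteq> V \<longrightarrow> ((\<exists>s\<in>S. dvdm s (\<kappa> + (h + 0))) \<longleftrightarrow> (\<exists>j\<in>Q. 1 \<le> Poly_Mapping.lookup \<kappa> j))"
      using True by (auto simp: Mm_def)
    moreover have "Q \<subseteq> V" by (auto simp: Q_def)
    ultimately show ?thesis using nh by (intro exI[of _ 0] exI[of _ Q]) (auto simp: Mm_def)
  next
    case False
    then obtain \<kappa> where \<kappa>: "Poly_Mapping.keys \<kappa> \<subseteq> V" "Mm (\<kappa> + h)" "\<forall>j\<in>Q. Poly_Mapping.lookup \<kappa> j = 0"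
      by (auto simp: not_le)
    then obtain s1 where s1: "s1 \<in> S" "dvdm s1 (\<kappa> + h)" by (auto simp: Mm_def)
    define W where "W = {s\<in>S. \<forall>j\<in>Q. Poly_Mapping.lookup (s - h) j = 0}"
    have "Poly_Mapping.lookup (s1 - h) j = 0" if "j \<in> Q" for j
    proof -
      have "Poly_Mapping.lookup s1 j \<le> Poly_Mapping.lookup \<kappa> j + Poly_Mapping.lookup h j"
        using s1(2) unfolding dvdm_iff by (simp add: lookup_add)
      then show ?thesis using \<kappa>(3) that by (simp add: lookup_minus_nat)
    qed
    then have "s1 \<in> W" using s1(1) unfolding W_def by blast
    then obtain s0 where s0: "s0 \<in> W" "\<forall>s. s \<in> W \<longrightarrow> ddeg V (s0 - h) \<le> ddeg V (s - h)"
      using ex_has_least_nat[of "\<lambda>s. s \<in> W" s1 "\<lambda>s. ddeg V (s - h)"] by blast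
    have s0S: "s0 \<in> S" using s0(1) by (simp add: W_def)
    define w where "w = s0 - h"
    have wQ: "\<forall>j\<in>Q. Poly_Mapping.lookup w j = 0" using s0(1) by (simp add: W_def w_def)
    have wV: "Poly_Mapping.keys w \<subseteq> V" using keys_minus_nat_sub[of s0 h] SV s0S by (auto simp: w_def)
    have s0w: "dvdm s0 (w + h)" unfolding dvdm_iff w_def by (simp add: lookup_add lookup_minus_nat) (meson le_diff_conv order_refl)
    have "w \<noteq> 0"
    proof
      assume "w = 0"
      then have "dvdm s0 h" using s0w by simp
      then show False using nh s0S by (auto simp: Mm_def)
    qed
    then obtain j0 where j0: "j0 \<in> Poly_Mapping.keys w" by (metis all_not_in_conv keys_eq_empty)
    have j0V: "j0 \<in> V" using j0 wV by blast
    have j0l: "1 \<le> Poly_Mapping.lookup w j0" using j0 by (simp add: in_keys_iff)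
    define w' where "w' = w - Poly_Mapping.single j0 1"
    have ww': "w' + Poly_Mapping.single j0 1 = w" unfolding w'_def by (rule single_minus_add[OF j0l])
    have w'V: "Poly_Mapping.keys w' \<subseteq> V" using keys_minus_nat_sub[of w] wV by (auto simp: w'_def)
    have "w' \<noteq> 0"
    proof
      assume "w' = 0"
      then have "w = Poly_Mapping.single j0 1" using ww' by simp
      then have "Mm (Poly_Mapping.single j0 1 + h)" using s0w s0S by (auto simp: Mm_def)
      then have "j0 \<in> Q" using j0V by (simp add: Q_def)
      then show False using wQ j0 by (simp add: in_keys_iff)
    qed
    then obtain v0 where v0: "v0 \<in> Poly_Mapping.keys w'" by (metis all_not_in_conv keys_eq_empty)
    have "v0 \<in> V" using v0 w'V by blast
    then have "Poly_Mapping.lookup w' v0 \<le> ddeg V w'" using ddeg_ge_lookup[OF V] by blast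
    moreover have "1 \<le> Poly_Mapping.lookup w' v0" using v0 by (simp add: in_keys_iff)
    ultimately have dw': "1 \<le> ddeg V w'" by linarith
    have dw: "ddeg V w = ddeg V w' + 1"
      using ddeg_add[of V w' "Poly_Mapping.single j0 1"] ddeg_single[OF V, of j0] j0V ww' by simp
    define h' where "h' = h + w'"
    have h'V: "Poly_Mapping.keys h' \<subseteq> V" using hV w'V by (auto simp: h'_def keys_add_nat)
    have nh': "\<not> Mm h'"
    proof
      assume "Mm h'"
      then obtain s' where s': "s' \<in> S" "dvdm s' (h + w')" by (auto simp: Mm_def h'_def)
      have le: "Poly_Mapping.lookup (s' - h) v \<le> Poly_Mapping.lookup w' v" for v
        using s'(2) unfolding dvdm_iff by (simp add: lookup_minus_nat lookup_add) (metis add_diff_cancel_left' diff_le_mono)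
      have le2: "Poly_Mapping.lookup w' v \<le> Poly_Mapping.lookup w v" for v
        unfolding w'_def by (simp add: lookup_minus_nat)
      have "Poly_Mapping.lookup (s' - h) j = 0" if "j \<in> Q" for j
        using le[of j] le2[of j] wQ that by simp
      then have "s' \<in> W" using s'(1) unfolding W_def by blast
      then have "ddeg V w \<le> ddeg V (s' - h)" using s0(2) by (simp add: w_def)
      also have "\<dots> \<le> ddeg V w'" using ddeg_mono[OF V] le by blast
      finally show False using dw by simp
    qed
    have lt: "(\<Sum>s\<in>S. ddeg V (s - h')) < (\<Sum>s\<in>S. ddeg V (s - h))"
    proof (rule sum_strict_mono_ex1[OF fin])
      show "\<forall>s\<in>S. ddeg V (s - h') \<le> ddeg V (s - h)"
      proof
        fix s
        have "\<forall>v\<in>V. Poly_Mapping.lookup (s - h') v \<le> Poly_Mapping.lookup (s - h) v"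
          by (simp add: h'_def lookup_minus_nat lookup_add diff_le_mono2)
        then show "ddeg V (s - h') \<le> ddeg V (s - h)" by (rule ddeg_mono[OF V])
      qed
      have "s0 - h' = Poly_Mapping.single j0 1"
      proof (rule poly_mapping_eqI)
        fix v
        have "Poly_Mapping.lookup w v = Poly_Mapping.lookup w' v + Poly_Mapping.lookup (Poly_Mapping.single j0 1) v"
          using ww' by (metis lookup_add)
        then show "Poly_Mapping.lookup (s0 - h') v = Poly_Mapping.lookup (Poly_Mapping.single j0 1) v"
          by (simp add: h'_def w_def lookup_minus_nat lookup_add diff_diff_left)
      qed
      then have "ddeg V (s0 - h') = 1" using ddeg_single[OF V, of j0] j0V by simp
      then show "\<exists>s\<in>S. ddeg V (s - h') < ddeg V (s - h)"
        using s0S dw dw' by (intro bexI[of _ s0]) (auto simp: w_def)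
    qed
    obtain g' Q' where g': "Poly_Mapping.keys g' \<subseteq> V" "Q' \<subseteq> V" "\<not> (\<exists>s\<in>S. dvdm s (h' + g'))"
      "\<forall>\<kappa>. Poly_Mapping.keys \<kappa> \<subseteq> V \<longrightarrow> ((\<exists>s\<in>S. dvdm s (\<kappa> + (h' + g'))) \<longleftrightarrow> (\<exists>j\<in>Q'. 1 \<le> Poly_Mapping.lookup \<kappa> j))"
      using less.hyps[OF lt h'V] nh' by (auto simp: Mm_def)
    have "h' + g' = h + (w' + g')" by (simp add: h'_def add.assoc)
    moreover have "Poly_Mapping.keys (w' + g') \<subseteq> V" using w'V g'(1) by (auto simp: keys_add_nat)
    ultimately show ?thesis using g' by (intro exI[of _ "w' + g'"] exI[of _ Q']) auto
  qed
qed

lemma Zs_cong: "(\<And>\<kappa>. Poly_Mapping.keys \<kappa> \<subseteq> V \<Longrightarrow> \<Phi> \<kappa> \<longleftrightarrow> \<Psi> \<kappa>) \<Longrightarrow> (Zs V \<Phi> :: 'k::field mpoly set) = Zs V \<Psi>"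
  unfolding Zs_def by (auto simp: pr_carrier)

lemma addset_finite: "finite S \<Longrightarrow> finite T \<Longrightarrow> finite (addset S T)"
proof -
  assume "finite S" "finite T"
  moreover have "addset S T = (\<lambda>(s, t). s + t) ` (S \<times> T)" by (auto simp: addset_def)
  ultimately show ?thesis by simp
qed

lemma msum_finite: "finite S \<Longrightarrow> finite (msum S m)"
  by (induction m) (auto intro: addset_finite)

lemma msum_one: "msum S 1 = S"
  by (auto simp: addset_def)

lemma msum_restrict:
  "s \<in> msum G m \<Longrightarrow> Poly_Mapping.lookup s i = 0 \<Longrightarrow> s \<in> msum {u\<in>G. Poly_Mapping.lookup u i = 0} m"
proof (induction m arbitrary: s)
  case 0 then show ?case by simp
next
  case (Suc m)
  then obtain s' t where st: "s' \<in> msum G m" "t \<in> G" "s = s' + t" by (auto simp: addset_def)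
  then have "Poly_Mapping.lookup s' i = 0" "Poly_Mapping.lookup t i = 0" using Suc.prems(2) by (auto simp: lookup_add)
  then have "s' \<in> msum {u\<in>G. Poly_Mapping.lookup u i = 0} m" "t \<in> {u\<in>G. Poly_Mapping.lookup u i = 0}"
    using Suc.IH st by auto
  then show ?case using st(3) unfolding msum.simps addset_def by blast
qed

lemma QD_determines:
  assumes "finite V" "Q \<subseteq> V" "F \<subseteq> V" "(QD V Q 1 :: 'k::field mpoly set) = QD V F 1"
  shows "Q = F"
proof -
  have fQ: "finite Q" and fF: "finite F" using assms finite_subset by blast+
  have key: "(monomial (Poly_Mapping.single j 1) :: 'k mpoly) \<in> QD V X 1 \<longleftrightarrow> j \<in> X"
    if "j \<in> V" "finite X" for j X
    using that monomial_carrier[of "Poly_Mapping.single j 1" V] ddeg_single[OF that(2), of j] by (auto simp: QD_def Zs_def)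
  show ?thesis
  proof
    show "Q \<subseteq> F" using key[OF _ fQ] key[OF _ fF] assms(2,4) by blast
    show "F \<subseteq> Q" using key[OF _ fQ] key[OF _ fF] assms(3,4) by blast
  qed
qed

lemma MI_eq_mincover1:
  assumes sq: "sqfree V G" and V: "finite V"
  shows "(MI V G :: 'k::field mpoly set) = Zs V (\<lambda>\<kappa>. \<forall>F\<in>{F. mincover V G F}. 1 \<le> ddeg F \<kappa>)"
  unfolding MI_def
proof (rule Zs_cong)
  fix \<kappa> :: "nat \<Rightarrow>\<^sub>0 nat" assume kV: "Poly_Mapping.keys \<kappa> \<subseteq> V"
  show "(\<exists>s\<in>G. dvdm s \<kappa>) \<longleftrightarrow> (\<forall>F\<in>{F. mincover V G F}. 1 \<le> ddeg F \<kappa>)"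
  proof
    assume "\<exists>s\<in>G. dvdm s \<kappa>"
    then obtain s where s: "s \<in> G" "dvdm s \<kappa>" by blast
    show "\<forall>F\<in>{F. mincover V G F}. 1 \<le> ddeg F \<kappa>"
    proof
      fix F assume "F \<in> {F. mincover V G F}"
      then have mc: "mincover V G F" by simp
      have fF: "finite F" using mincover_finite[OF V mc] .
      have "s \<in> msum G 1" using s(1) msum_one by metis
      then have "1 \<le> ddeg F s" using msum_ddeg[of V G F s 1] mc fF by (auto simp: mincover_def)
      then show "1 \<le> ddeg F \<kappa>" using dvdm_ddeg[OF fF s(2)] by linarith
    qed
  next
    assume "\<forall>F\<in>{F. mincover V G F}. 1 \<le> ddeg F \<kappa>"
    then show "\<exists>s\<in>G. dvdm s \<kappa>" using sqfree_m1[OF sq V kV] by auto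
  qed
qed


lemma Ass_powers:
  assumes cop: "copersistent R I" and one: "ideal_power R I 1 = I"
  shows "1 \<le> j \<Longrightarrow> Ass R (ideal_power R I j) \<subseteq> Ass R I"
proof (induction j)
  case 0 then show ?case by simp
next
  case (Suc j)
  show ?case
  proof (cases "j = 0")
    case True then show ?thesis using one by simp
  next
    case False
    then have "Ass R (ideal_power R I (j + 1)) \<subseteq> Ass R (ideal_power R I j)"
      using cop by (simp add: copersistent_def)
    then show ?thesis using Suc.IH False by simp
  qed
qed

lemma main_I:
  fixes G :: "(nat \<Rightarrow>\<^sub>0 nat) set" and V :: "nat set"
  assumes V: "finite V" and Gf: "finite G" and sq: "sqfree V G"
    and cop: "copersistent (poly_ring V) (MI V G :: 'k::field mpoly set)"
    and m: "1 \<le> m" and kV: "Poly_Mapping.keys \<kappa> \<subseteq> V"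
    and hyp: "\<forall>F. mincover V G F \<longrightarrow> m \<le> ddeg F \<kappa>"
  shows "\<exists>s\<in>msum G m. dvdm s \<kappa>"
proof (rule ccontr)
  assume nk: "\<not> (\<exists>s\<in>msum G m. dvdm s \<kappa>)"
  let ?R = "poly_ring V :: 'k mpoly ring"
  let ?I = "MI V G :: 'k mpoly set"
  have GV: "\<forall>s\<in>G. Poly_Mapping.keys s \<subseteq> V" using sq by (simp add: sqfree_def)
  have powI: "ideal_power ?R ?I j = MI V (msum G j)" for j using MI_power[OF GV] by blast
  have one: "ideal_power ?R ?I 1 = ?I" using powI[of 1] msum_one by metis
  define S where "S = msum G m"
  have Sf: "finite S" using msum_finite[OF Gf] by (simp add: S_def)
  have SV: "\<forall>s\<in>S. Poly_Mapping.keys s \<subseteq> V" using msum_keys[OF GV] by (simp add: S_def)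
  obtain g Q where gQ: "Poly_Mapping.keys g \<subseteq> V" "Q \<subseteq> V" "\<not> (\<exists>s\<in>S. dvdm s (\<kappa> + g))"
    "\<forall>\<kappa>'. Poly_Mapping.keys \<kappa>' \<subseteq> V \<longrightarrow> ((\<exists>s\<in>S. dvdm s (\<kappa>' + (\<kappa> + g))) \<longleftrightarrow> (\<exists>j\<in>Q. 1 \<le> Poly_Mapping.lookup \<kappa>' j))"
    using colon_prime_exists[OF Sf SV V kV] nk by (auto simp: S_def)
  define x where "x = \<kappa> + g"
  have xV: "Poly_Mapping.keys x \<subseteq> V" using kV gQ(1) by (auto simp: x_def keys_add_nat)
  have fQ: "finite Q" using gQ(2) V finite_subset by blast
  have colon: "{r \<in> carrier ?R. r \<otimes>\<^bsub>?R\<^esub> monomial x \<in> ideal_power ?R ?I m} = QD V Q 1"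
  proof -
    have "r \<otimes>\<^bsub>?R\<^esub> monomial x \<in> ideal_power ?R ?I m \<longleftrightarrow> r \<in> QD V Q 1" if r: "r \<in> carrier ?R" for r
    proof -
      have kr: "\<forall>\<kappa>'\<in>Poly_Mapping.keys r. Poly_Mapping.keys \<kappa>' \<subseteq> V" using r by (simp add: pr_carrier)
      have "r \<otimes>\<^bsub>?R\<^esub> monomial x \<in> ideal_power ?R ?I m \<longleftrightarrow> r * monomial x \<in> Zs V (\<lambda>y. \<exists>s\<in>S. dvdm s y)"
        using powI[of m] by (simp add: MI_def S_def)
      also have "\<dots> \<longleftrightarrow> (\<forall>\<kappa>'\<in>Poly_Mapping.keys r. \<exists>s\<in>S. dvdm s (\<kappa>' + x))"
        by (rule Zs_colon[OF r xV])
      also have "\<dots> \<longleftrightarrow> (\<forall>\<kappa>'\<in>Poly_Mapping.keys r. 1 \<le> ddeg Q \<kappa>')"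
        using gQ(4) kr ddeg_pos_iff[OF fQ] by (auto simp: x_def)
      also have "\<dots> \<longleftrightarrow> r \<in> QD V Q 1" using r by (simp add: QD_def Zs_def)
      finally show ?thesis .
    qed
    then show ?thesis by (auto simp: QD_def Zs_def)
  qed
  have "QD V Q 1 \<in> Ass ?R (ideal_power ?R ?I m)"
    unfolding Ass_def using QD_prime[of V Q] colon monomial_carrier[OF xV]
    by (auto intro!: bexI[of _ "monomial x"])
  then have "QD V Q 1 \<in> Ass ?R ?I" using Ass_powers[OF cop one m] by blast
  then obtain a where a: "a \<in> carrier ?R" "QD V Q 1 = {r \<in> carrier ?R. r \<otimes>\<^bsub>?R\<^esub> a \<in> ?I}"
    and pr: "primeideal (QD V Q 1 :: 'k mpoly set) ?R"
    unfolding Ass_def by blast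
  have Ieq: "?I = Zs V (\<lambda>\<kappa>. \<forall>F\<in>{F. mincover V G F}. 1 \<le> ddeg F \<kappa>)"
    by (rule MI_eq_mincover1[OF sq V])
  have Peq: "(QD V Q 1 :: 'k mpoly set) = {r \<in> carrier ?R. r * a \<in> Zs V (\<lambda>\<kappa>. \<forall>F\<in>{F. mincover V G F}. 1 \<le> ddeg F \<kappa>)}"
    using a(2) Ieq by simp
  obtain F where F: "F \<in> {F. mincover V G F}" "(QD V Q 1 :: 'k mpoly set) = QD V F 1"
    using prime_colon_inter[OF finite_MC[OF V] order_refl a(1) Peq pr] by blast
  have mc: "mincover V G F" using F(1) by simp
  have FV: "F \<subseteq> V" using mc by (simp add: mincover_def cover_def)
  have QF: "Q = F" by (rule QD_determines[OF V gQ(2) FV F(2)])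
  have fF: "finite F" using mincover_finite[OF V mc] .
  have "m \<le> ddeg F x" using hyp mc ddeg_add[of F \<kappa> g] by (auto simp: x_def)
  then obtain s where s: "s \<in> msum G m" "\<forall>v\<in>F. Poly_Mapping.lookup s v \<le> Poly_Mapping.lookup x v"
    "\<forall>v. Poly_Mapping.lookup s v \<le> m"
    using mincover_msum[OF sq mc V] by blast
  have sV: "Poly_Mapping.keys s \<subseteq> V" using msum_keys[OF GV] s(1) by blast
  define z :: "nat \<Rightarrow>\<^sub>0 nat" where "z = Abs_poly_mapping (\<lambda>v. if v \<in> V - F then m else 0)"
  have lz: "Poly_Mapping.lookup z v = (if v \<in> V - F then m else 0)" for v
  proof -
    have "finite {v. (if v \<in> V - F then m else 0) \<noteq> 0}" by (rule finite_subset[OF _ V]) auto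
    then show ?thesis by (simp add: z_def)
  qed
  have zV: "Poly_Mapping.keys z \<subseteq> V" by (auto simp: in_keys_iff lz split: if_splits)
  have "dvdm s (z + x)" unfolding dvdm_iff
  proof
    fix v
    show "Poly_Mapping.lookup s v \<le> Poly_Mapping.lookup (z + x) v"
    proof (cases "v \<in> V")
      case True
      then show ?thesis using s(2)[rule_format, of v] s(3)[rule_format, of v]
        by (cases "v \<in> F") (auto simp: lookup_add lz trans_le_add1)
    next
      case False
      then have "Poly_Mapping.lookup s v = 0" using sV by (auto simp: in_keys_iff)
      then show ?thesis by simp
    qed
  qed
  then have "\<exists>j\<in>Q. 1 \<le> Poly_Mapping.lookup z j" using gQ(4) zV s(1) by (auto simp: S_def x_def)
  then show False using QF by (auto simp: lz)
qed

lemma main_J: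
  fixes G :: "(nat \<Rightarrow>\<^sub>0 nat) set" and V :: "nat set"
  assumes V: "finite V" and Gf: "finite G" and sq: "sqfree V G"
    and cop: "copersistent (poly_ring V) (MI V G :: 'k::field mpoly set)"
    and m: "1 \<le> m" and G': "G' = {u\<in>G. Poly_Mapping.lookup u i = 0}"
  shows "(ideal_power (poly_ring (V - {i})) (MI (V - {i}) G') m :: 'k mpoly set)
     = Zs (V - {i}) (\<lambda>\<kappa>. \<forall>F\<in>{F. mincover (V - {i}) G' F}. m \<le> ddeg F \<kappa>)"
proof -
  have GV: "\<forall>s\<in>G. Poly_Mapping.keys s \<subseteq> V" using sq by (simp add: sqfree_def)
  have G'V: "\<forall>s\<in>G'. Poly_Mapping.keys s \<subseteq> V - {i}" using GV by (auto simp: G' in_keys_iff)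
  have V': "finite (V - {i})" using V by simp
  have "(ideal_power (poly_ring (V - {i})) (MI (V - {i}) G') m :: 'k mpoly set) = MI (V - {i}) (msum G' m)"
    by (rule MI_power[OF G'V])
  also have "\<dots> = Zs (V - {i}) (\<lambda>\<kappa>. \<forall>F\<in>{F. mincover (V - {i}) G' F}. m \<le> ddeg F \<kappa>)"
    unfolding MI_def
  proof (rule Zs_cong)
    fix \<kappa> :: "nat \<Rightarrow>\<^sub>0 nat" assume kV: "Poly_Mapping.keys \<kappa> \<subseteq> V - {i}"
    show "(\<exists>s\<in>msum G' m. dvdm s \<kappa>) \<longleftrightarrow> (\<forall>F\<in>{F. mincover (V - {i}) G' F}. m \<le> ddeg F \<kappa>)"
    proof
      assume "\<exists>s\<in>msum G' m. dvdm s \<kappa>"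
      then obtain s where s: "s \<in> msum G' m" "dvdm s \<kappa>" by blast
      show "\<forall>F\<in>{F. mincover (V - {i}) G' F}. m \<le> ddeg F \<kappa>"
      proof
        fix F assume "F \<in> {F. mincover (V - {i}) G' F}"
        then have mc: "mincover (V - {i}) G' F" by simp
        have fF: "finite F" using mincover_finite[OF V' mc] .
        have "m \<le> ddeg F s" using msum_ddeg[of "V - {i}" G' F s m] mc fF s(1) by (auto simp: mincover_def)
        then show "m \<le> ddeg F \<kappa>" using dvdm_ddeg[OF fF s(2)] by linarith
      qed
    next
      assume hyp: "\<forall>F\<in>{F. mincover (V - {i}) G' F}. m \<le> ddeg F \<kappa>"
      have hyp2: "\<forall>F. mincover V G F \<longrightarrow> m \<le> ddeg F \<kappa>"
      proof (intro allI impI)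
        fix F assume mc: "mincover V G F"
        have fF: "finite F" using mincover_finite[OF V mc] .
        have "cover (V - {i}) G' (F - {i})"
          unfolding cover_def
        proof (intro conjI ballI)
          show "F - {i} \<subseteq> V - {i}" using mc by (auto simp: mincover_def cover_def)
          fix u assume u: "u \<in> G'"
          then obtain j where "j \<in> F" "1 \<le> Poly_Mapping.lookup u j"
            using mc by (auto simp: G' mincover_def cover_def)
          moreover have "j \<noteq> i" using u calculation by (auto simp: G')
          ultimately show "\<exists>j\<in>F - {i}. 1 \<le> Poly_Mapping.lookup u j" by blast
        qed
        then obtain F' where F': "F' \<subseteq> F - {i}" "mincover (V - {i}) G' F'"
          using exists_mincover[of "V - {i}" G' "F - {i}"] fF by blast
        have "m \<le> ddeg F' \<kappa>" using hyp F'(2) by blast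
        also have "\<dots> \<le> ddeg F \<kappa>" using ddeg_subset[OF fF] F'(1) by blast
        finally show "m \<le> ddeg F \<kappa>" .
      qed
      have kV2: "Poly_Mapping.keys \<kappa> \<subseteq> V" using kV by blast
      obtain s where s: "s \<in> msum G m" "dvdm s \<kappa>" using main_I[OF V Gf sq cop m kV2 hyp2] by blast
      have "Poly_Mapping.lookup \<kappa> i = 0" using kV by (auto simp: in_keys_iff)
      then have "Poly_Mapping.lookup s i = 0" using s(2) unfolding dvdm_iff by (metis le_zero_eq)
      then have "s \<in> msum G' m" using msum_restrict[OF s(1)] by (simp add: G')
      then show "\<exists>s\<in>msum G' m. dvdm s \<kappa>" using s(2) by blast
    qed
  qed
  finally show ?thesis .
qed

lemma ddeg_single_gen: "finite F \<Longrightarrow> ddeg F (Poly_Mapping.single j c) = (if j \<in> F then c else 0)"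
  unfolding ddeg_def by (simp add: lookup_single when_def)

lemma witness_exists:
  assumes V: "finite V" and mc: "mincover V S F" and k: "1 \<le> k"
  shows "\<exists>\<beta>. Poly_Mapping.keys \<beta> \<subseteq> V \<and> (\<forall>\<kappa>. (\<forall>F'. mincover V S F' \<longrightarrow> k \<le> ddeg F' (\<kappa> + \<beta>)) \<longleftrightarrow> 1 \<le> ddeg F \<kappa>)"
proof -
  have fF: "finite F" using mincover_finite[OF V mc] .
  have FV: "F \<subseteq> V" using mc by (simp add: mincover_def cover_def)
  define bo :: "nat \<Rightarrow>\<^sub>0 nat" where "bo = Abs_poly_mapping (\<lambda>v. if v \<in> V - F then k else 0)"
  have lbo: "Poly_Mapping.lookup bo v = (if v \<in> V - F then k else 0)" for v
  proof -
    have "finite {v. (if v \<in> V - F then k else 0) \<noteq> 0}" by (rule finite_subset[OF _ V]) auto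
    then show ?thesis by (simp add: bo_def)
  qed
  define j0 where "j0 = (SOME j. j \<in> F)"
  define bi :: "nat \<Rightarrow>\<^sub>0 nat" where "bi = (if F = {} then 0 else Poly_Mapping.single j0 (k - 1))"
  define \<beta> where "\<beta> = bo + bi"
  have j0F: "F \<noteq> {} \<Longrightarrow> j0 \<in> F" unfolding j0_def by (simp add: some_in_eq)
  have boV: "Poly_Mapping.keys bo \<subseteq> V" by (auto simp: in_keys_iff lbo split: if_splits)
  have biV: "Poly_Mapping.keys bi \<subseteq> V" using j0F FV by (auto simp: bi_def)
  have \<beta>V: "Poly_Mapping.keys \<beta> \<subseteq> V" using boV biV by (auto simp: \<beta>_def keys_add_nat)
  have dbo: "ddeg F bo = 0" unfolding ddeg_def by (simp add: lbo)
  have dbi: "ddeg F bi = (if F = {} then 0 else k - 1)"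
    using j0F by (simp add: bi_def ddeg_single_gen[OF fF])
  have dF: "ddeg F (\<kappa> + \<beta>) = ddeg F \<kappa> + (if F = {} then 0 else k - 1)" for \<kappa>
    by (simp add: \<beta>_def ddeg_add dbo dbi)
  have "(\<forall>F'. mincover V S F' \<longrightarrow> k \<le> ddeg F' (\<kappa> + \<beta>)) \<longleftrightarrow> 1 \<le> ddeg F \<kappa>" for \<kappa>
  proof
    assume "\<forall>F'. mincover V S F' \<longrightarrow> k \<le> ddeg F' (\<kappa> + \<beta>)"
    then have "k \<le> ddeg F (\<kappa> + \<beta>)" using mc by blast
    then show "1 \<le> ddeg F \<kappa>" using k dF[of \<kappa>] by (cases "F = {}") (auto simp: ddeg_def)
  next
    assume h1: "1 \<le> ddeg F \<kappa>"
    then have Fne: "F \<noteq> {}" by (auto simp: ddeg_def)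
    show "\<forall>F'. mincover V S F' \<longrightarrow> k \<le> ddeg F' (\<kappa> + \<beta>)"
    proof (intro allI impI)
      fix F' assume mc': "mincover V S F'"
      show "k \<le> ddeg F' (\<kappa> + \<beta>)"
      proof (cases "F' = F")
        case True
        then show ?thesis using dF[of \<kappa>] h1 Fne by simp
      next
        case False
        have "\<not> F' \<subseteq> F"
        proof
          assume "F' \<subseteq> F"
          then have "F' \<subset> F" using False by blast
          then show False using mc mc' by (auto simp: mincover_def)
        qed
        then obtain j' where j': "j' \<in> F'" "j' \<notin> F" by blast
        have "j' \<in> V" using mc' j'(1) by (auto simp: mincover_def cover_def)
        then have "k \<le> Poly_Mapping.lookup (\<kappa> + \<beta>) j'" using j'(2) by (simp add: \<beta>_def lookup_add lbo)
        also have "\<dots> \<le> ddeg F' (\<kappa> + \<beta>)" using ddeg_ge_lookup[OF mincover_finite[OF V mc'] j'(1)] .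
        finally show ?thesis .
      qed
    qed
  qed
  then show ?thesis using \<beta>V by blast
qed

theorem proposition3p23:
  fixes n i :: nat and G :: "(nat \<Rightarrow>\<^sub>0 nat) set" and I :: "'k::field mpoly set"
  assumes "minimal_sqfree_gens {1..n} G"
    and "I = genideal (poly_ring {1..n}) (monomial ` G)"
    and "1 \<le> i" and "i \<le> n"
    and "copersistent (poly_ring {1..n}) I"
  shows "copersistent (poly_ring ({1..n} - {i})) (deletion {1..n} G i :: 'k mpoly set)"
proof -
  define V where "V = {1..n}"
  define G' where "G' = {u\<in>G. Poly_Mapping.lookup u i = 0}"
  have V: "finite V" by (simp add: V_def)
  have V': "finite (V - {i})" using V by simp
  have Gf: "finite G" and sq: "sqfree V G"
    using assms(1) by (auto simp: minimal_sqfree_gens_def sqfree_def V_def)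
  have GV: "\<forall>s\<in>G. Poly_Mapping.keys s \<subseteq> V" using sq by (simp add: sqfree_def)
  have G'V: "\<forall>s\<in>G'. Poly_Mapping.keys s \<subseteq> V - {i}" using GV by (auto simp: G'_def in_keys_iff)
  have IMI: "I = MI V G" using assms(2) genideal_MI[OF GV] by (simp add: V_def)
  have cop: "copersistent (poly_ring V) (MI V G :: 'k mpoly set)" using assms(5) IMI by (simp add: V_def)
  have JMI: "(deletion {1..n} G i :: 'k mpoly set) = MI (V - {i}) G'"
    unfolding deletion_def using genideal_MI[OF G'V] by (simp add: V_def G'_def)
  let ?R = "poly_ring (V - {i}) :: 'k mpoly ring"
  let ?J = "MI (V - {i}) G' :: 'k mpoly set"
  have powJ: "ideal_power ?R ?J m = Zs (V - {i}) (\<lambda>\<kappa>. \<forall>F\<in>{F. mincover (V - {i}) G' F}. m \<le> ddeg F \<kappa>)"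
    if "1 \<le> m" for m
    using main_J[OF V Gf sq cop that G'_def] .
  have "Ass ?R (ideal_power ?R ?J (k + 1)) \<subseteq> Ass ?R (ideal_power ?R ?J k)" if k: "1 \<le> k" for k
  proof
    fix P assume "P \<in> Ass ?R (ideal_power ?R ?J (k + 1))"
    then obtain a where a: "a \<in> carrier ?R" "P = {r \<in> carrier ?R. r \<otimes>\<^bsub>?R\<^esub> a \<in> ideal_power ?R ?J (k + 1)}"
      and pr: "primeideal P ?R" unfolding Ass_def by blast
    have Peq: "P = {r \<in> carrier ?R. r * a \<in> Zs (V - {i}) (\<lambda>\<kappa>. \<forall>F\<in>{F. mincover (V - {i}) G' F}. (k + 1) \<le> ddeg F \<kappa>)}"
      using a(2) powJ[of "k + 1"] by simp
    obtain F where F: "F \<in> {F. mincover (V - {i}) G' F}" "P = QD (V - {i}) F 1"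
      using prime_colon_inter[OF finite_MC[OF V'] _ a(1) Peq pr] by auto
    have mc: "mincover (V - {i}) G' F" using F(1) by simp
    obtain \<beta> where \<beta>: "Poly_Mapping.keys \<beta> \<subseteq> V - {i}"
      "\<forall>\<kappa>. (\<forall>F'. mincover (V - {i}) G' F' \<longrightarrow> k \<le> ddeg F' (\<kappa> + \<beta>)) \<longleftrightarrow> 1 \<le> ddeg F \<kappa>"
      using witness_exists[OF V' mc k] by blast
    have colon: "{r \<in> carrier ?R. r \<otimes>\<^bsub>?R\<^esub> monomial \<beta> \<in> ideal_power ?R ?J k} = QD (V - {i}) F 1"
    proof -
      have "r \<otimes>\<^bsub>?R\<^esub> monomial \<beta> \<in> ideal_power ?R ?J k \<longleftrightarrow> r \<in> QD (V - {i}) F 1" if r: "r \<in> carrier ?R" for r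
      proof -
        have "r \<otimes>\<^bsub>?R\<^esub> monomial \<beta> \<in> ideal_power ?R ?J k \<longleftrightarrow>
            r * monomial \<beta> \<in> Zs (V - {i}) (\<lambda>\<kappa>. \<forall>F\<in>{F. mincover (V - {i}) G' F}. k \<le> ddeg F \<kappa>)"
          using powJ[OF k] by simp
        also have "\<dots> \<longleftrightarrow> (\<forall>\<kappa>\<in>Poly_Mapping.keys r. \<forall>F\<in>{F. mincover (V - {i}) G' F}. k \<le> ddeg F (\<kappa> + \<beta>))"
          by (rule Zs_colon[OF r \<beta>(1)])
        also have "\<dots> \<longleftrightarrow> (\<forall>\<kappa>\<in>Poly_Mapping.keys r. 1 \<le> ddeg F \<kappa>)"
          using \<beta>(2) by auto
        also have "\<dots> \<longleftrightarrow> r \<in> QD (V - {i}) F 1" using r by (simp add: QD_def Zs_def)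
        finally show ?thesis .
      qed
      then show ?thesis by (auto simp: QD_def Zs_def)
    qed
    show "P \<in> Ass ?R (ideal_power ?R ?J k)"
      unfolding Ass_def using QD_prime[of "V - {i}" F] colon monomial_carrier[OF \<beta>(1)] F(2)
      by (auto intro!: bexI[of _ "monomial \<beta>"])
  qed
  then have "copersistent ?R ?J" unfolding copersistent_def by blast
  then show ?thesis using JMI by (simp add: V_def)
qed

end
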